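(* Let $F\subsetneq K$ be fields of characteristic $0$, with $F$ a proper nonempty subfield of $K$. Let $p(x)=\sum_{k=0}^{n}a_k x^k\in K[x]$ be non-constant with $a_n\neq 0$, and let $q(x)=\sum_{j=0}^{m}b_j x^j\in K[x]\setminus F[x]$ with $b_m\neq 0$ and $b_m\in F$. If $b_j\notin F$ for some $j\geq 1$, then $p\circ q\notin F[x]$.
   Context: $F[x]$ denotes the set of polynomials with all coefficients in $F$. *)

theory Defs
  imports "HOL-Computational_Algebra.Polynomial"
begin

definition is_subfield :: "'a::field set \<Rightarrow> bool" where
  "is_subfield F \<longleftrightarrow> 0 \<in> F \<and> 1 \<in> F \<and>
     (\<forall>x\<in>F. \<forall>y\<in>F. x + y \<in> F \<and> x * y \<in> F) \<and>
     (\<forall>x\<in>F. - x \<in> F) \<and> (\<forall>x\<in>F. x \<noteq> 0 \<longrightarrow> inverse x \<in> F)"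

definition poly_over :: "'a::zero set \<Rightarrow> 'a poly \<Rightarrow> bool" where
  "poly_over F p \<longleftrightarrow> (\<forall>i. coeff p i \<in> F)"

end

theory Submission
  imports Defs
begin

lemma sf_sum:
  assumes "is_subfield F" "\<And>i. i \<in> A \<Longrightarrow> f i \<in> F"
  shows "sum f A \<in> F"
  using assms(2)
proof (induction A rule: infinite_finite_induct)
  case (infinite A) then show ?case using assms(1) by (simp add: is_subfield_def)
next
  case empty then show ?case using assms(1) by (simp add: is_subfield_def)
next
  case (insert x A) then show ?case using assms(1) by (simp add: is_subfield_def)
qed

lemma sf_power:
  assumes "is_subfield F" "x \<in> F" shows "x ^ n \<in> F"
  using assms by (induction n) (auto simp: is_subfield_def)

lemma sf_of_nat:
  assumes "is_subfield F" shows "of_nat n \<in> F"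
  using assms by (induction n) (auto simp: is_subfield_def)

lemma sf_diff:
  assumes "is_subfield F" "x \<in> F" "y \<in> F" shows "x - y \<in> F"
  using assms unfolding is_subfield_def by (metis diff_conv_add_uminus)

lemma sf_div:
  assumes "is_subfield F" "x \<in> F" "y \<in> F" shows "x / y \<in> F"
proof (cases "y = 0")
  case True then show ?thesis using assms by (simp add: is_subfield_def)
next
  case False then show ?thesis using assms unfolding is_subfield_def
    by (metis divide_inverse)
qed

lemma po_mult:
  assumes "is_subfield F" "poly_over F p" "poly_over F q"
  shows "poly_over F (p * q)"
  unfolding poly_over_def coeff_mult
  using assms by (auto intro!: sf_sum simp: poly_over_def is_subfield_def)

lemma po_power:
  assumes "is_subfield F" "poly_over F p"
  shows "poly_over F (p ^ n)"
proof (induction n)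
  case 0 then show ?case using assms(1)
    by (auto simp: poly_over_def is_subfield_def coeff_1)
next
  case (Suc n) then show ?case using po_mult[OF assms(1) assms(2)] by simp
qed

lemma binom_aux:
  fixes A C :: "'a::comm_ring_1 poly"
  assumes "degree C \<le> degree A"
  shows "\<exists>S. (A+C)^(n+2) = A^(n+2) + smult (of_nat (n+2)) (A^(n+1)*C) + C^2*S
          \<and> degree S \<le> n * degree A"
proof (induction n)
  case 0
  have e: "(A+C)^2 = A^2 + 2*(A*C) + C^2" by (simp add: power2_eq_square algebra_simps)
  have g: "(A+C)^2 = A^2 + smult 2 (A*C) + C^2"
    using e unfolding numeral_mult_conv_smult .
  have "(A+C)^(0+2) = A^(0+2) + smult (of_nat (0+2)) (A^(0+1)*C) + C^2*1"
    using g by (simp only: add_0 power_one_right mult_1_right of_nat_numeral)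
  then show ?case by (intro exI[of _ 1]) simp
next
  case (Suc n)
  then obtain S where S: "(A+C)^(n+2) = A^(n+2) + smult (of_nat (n+2)) (A^(n+1)*C) + C^2*S"
    and dS: "degree S \<le> n * degree A" by blast
  define S' where "S' = A*S + smult (of_nat (n+2)) (A^(n+1)) + C*S"
  define K :: "'a poly" where "K = [:of_nat (n+2):]"
  define P where "P = A^(n+1)"
  have f1: "A^(n+2) = A*P" unfolding P_def by simp
  have f2: "A^(Suc n+2) = A*(A*P)" unfolding P_def by simp
  have f3: "A^(Suc n+1) = A*P" unfolding P_def by simp
  have f4: "\<And>X. smult (of_nat (n+2)) X = K*X" unfolding K_def by simp
  have f5: "\<And>X. smult (of_nat (Suc n+2)) X = (K+1)*X"
  proof -
    fix X :: "'a poly"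
    have "smult (of_nat (Suc n+2)) X = smult (of_nat (n+2) + 1) X" by simp
    also have "\<dots> = smult (of_nat (n+2)) X + X" by (simp only: smult_add_left smult_1_left)
    also have "\<dots> = (K+1)*X" using f4 by (simp add: distrib_right)
    finally show "smult (of_nat (Suc n+2)) X = (K+1)*X" .
  qed
  have "(A+C)^(Suc n+2) = (A+C) * (A+C)^(n+2)" by simp
  also have "\<dots> = (A+C) * (A*P + K*(P*C) + C^2*S)" unfolding S f1 f4 P_def ..
  also have "\<dots> = A*(A*P) + (K+1)*(A*P*C) + C^2*(A*S + K*P + C*S)"
    by (simp add: algebra_simps power2_eq_square)
  also have "\<dots> = A^(Suc n+2) + smult (of_nat (Suc n+2)) (A^(Suc n+1)*C) + C^2*S'"
    unfolding f2 f3 f5 S'_def f4 P_def ..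
  finally have eq: "(A+C)^(Suc n+2) = A^(Suc n+2) + smult (of_nat (Suc n+2)) (A^(Suc n+1)*C) + C^2*S'" .
  have d1: "degree (A*S) \<le> Suc n * degree A"
    using degree_mult_le[of A S] dS by simp
  have d2: "degree (smult (of_nat (n+2)) (A^(n+1)) :: 'a poly) \<le> Suc n * degree A"
    using degree_smult_le[of "of_nat (n+2)" "A^(n+1)"] degree_power_le[of A "n+1"] by (simp add: mult.commute)
  have d3: "degree (C*S) \<le> Suc n * degree A"
    using degree_mult_le[of C S] dS assms by simp
  have "degree S' \<le> Suc n * degree A"
    unfolding S'_def by (intro degree_add_le d1 d2 d3)
  with eq show ?case by blast
qed

lemma binom_main:
  fixes A C :: "'a::comm_ring_1 poly"
  assumes "degree C \<le> degree A" "n \<ge> 1"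
  shows "\<exists>S. (A+C)^n = A^n + smult (of_nat n) (A^(n-1)*C) + C^2*S
          \<and> (n = 1 \<longrightarrow> S = 0) \<and> (n \<ge> 2 \<longrightarrow> degree S \<le> (n-2) * degree A)"
proof (cases "n = 1")
  case True then show ?thesis by (intro exI[of _ 0]) simp
next
  case False
  have "n = (n-2) + 2" using False assms(2) by simp
  then obtain k where k: "n = k + 2" by blast
  from binom_aux[OF assms(1), of k] obtain S where
    "(A+C)^(k+2) = A^(k+2) + smult (of_nat (k+2)) (A^(k+1)*C) + C^2*S"
    "degree S \<le> k * degree A" by blast
  then show ?thesis using k by (intro exI[of _ S]) simp
qed

lemma pcompose_monom': "pcompose (monom a n) q = smult a (q ^ n)"
  for q :: "'a::comm_semiring_1 poly"
proof (induction n)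
  case 0 then show ?case by (simp add: monom_0)
next
  case (Suc n) then show ?case by (simp add: monom_Suc pcompose_pCons algebra_simps)
qed

theorem proposition11:
  fixes F :: "'a::field_char_0 set" and p q :: "'a poly"
  assumes "is_subfield F" and "F \<noteq> UNIV"
    and "degree p \<ge> 1"
    and "\<not> poly_over F q"
    and "lead_coeff q \<in> F"
    and "\<exists>j\<ge>1. coeff q j \<notin> F"
  shows "\<not> poly_over F (pcompose p q)"
proof
  assume PO: "poly_over F (pcompose p q)"
  note sf = assms(1)
  have F0: "0 \<in> F" using sf by (simp add: is_subfield_def)
  define m where "m = degree q"
  define J where "J = {j. j \<ge> 1 \<and> coeff q j \<notin> F}"
  have Jne: "J \<noteq> {}" using assms(6) J_def by auto
  have Jsub: "J \<subseteq> {..m}"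
  proof
    fix j assume "j \<in> J"
    then have "coeff q j \<noteq> 0" using F0 J_def by auto
    then show "j \<in> {..m}" using m_def le_degree by auto
  qed
  have finJ: "finite J" using Jsub finite_subset by blast
  define j where "j = Max J"
  have jJ: "j \<in> J" using Jne finJ j_def by simp
  have j1: "j \<ge> 1" and bj: "coeff q j \<notin> F" using jJ J_def by auto
  have above: "\<And>i. i > j \<Longrightarrow> coeff q i \<in> F"
  proof (rule ccontr)
    fix i assume "i > j" "coeff q i \<notin> F"
    then have "i \<in> J" using j1 J_def by auto
    then have "i \<le> j" using finJ j_def by simp
    with \<open>i > j\<close> show False by simp
  qed
  have jm: "j < m"
  proof -
    have "j \<le> m" using jJ Jsub by auto
    moreover have "j \<noteq> m" using bj assms(5) m_def by auto
    ultimately show ?thesis by simp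
  qed
  have bm0: "coeff q m \<noteq> 0"
    using jm m_def by (metis degree_0 leading_coeff_0_iff not_less_zero)
  define C where "C = poly_cutoff (j+1) q"
  define A where "A = q - C"
  have cC: "\<And>k. coeff C k = (if k \<le> j then coeff q k else 0)"
    unfolding C_def coeff_poly_cutoff by auto
  have cA: "\<And>k. coeff A k = (if k \<le> j then 0 else coeff q k)"
    unfolding A_def using cC by simp
  have qAC: "q = A + C" unfolding A_def by simp
  have degC: "degree C = j"
  proof (rule antisym)
    show "degree C \<le> j" by (rule degree_le) (simp add: cC)
    show "j \<le> degree C" using bj F0 cC le_degree by (metis order_refl)
  qed
  have degA: "degree A = m"
  proof (rule antisym)
    show "degree A \<le> m" by (rule degree_le) (simp add: cA m_def coeff_eq_0)
    show "m \<le> degree A" using bm0 cA jm le_degree by (metis leD)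
  qed
  have lcA: "lead_coeff A = coeff q m" using degA cA jm by simp
  have lcC: "lead_coeff C = coeff q j" using degC cC by simp
  have poA: "poly_over F A" unfolding poly_over_def
    using cA F0 above by auto
  define n where "n = degree p"
  have n1: "n \<ge> 1" using assms(3) n_def by simp
  define a where "a = lead_coeff p"
  have a0: "a \<noteq> 0" using n1 n_def a_def by auto
  define p' where "p' = p - monom a n"
  have degp': "degree p' \<le> n - 1"
  proof (rule degree_le, intro allI impI)
    fix i assume "n - 1 < i"
    then have "i \<ge> n" by simp
    then show "coeff p' i = 0"
    proof (cases "i = n")
      case True then show ?thesis by (simp add: p'_def a_def n_def)
    next
      case False then have "i > degree p" using \<open>i \<ge> n\<close> n_def by simp
      then show ?thesis using False by (simp add: p'_def n_def coeff_eq_0)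
    qed
  qed
  have pq: "pcompose p q = smult a (q ^ n) + pcompose p' q"
    unfolding p'_def using pcompose_add[of "monom a n" "p - monom a n" q]
    by (simp add: pcompose_monom')
  define D where "D = (n-1)*m + j"
  have dp'q: "degree (pcompose p' q) < D"
  proof -
    have "degree (pcompose p' q) = degree p' * m" by (simp add: degree_pcompose m_def)
    also have "\<dots> \<le> (n-1)*m" using degp' by simp
    also have "\<dots> < D" using j1 D_def by simp
    finally show ?thesis .
  qed
  obtain S where S: "(A+C)^n = A^n + smult (of_nat n) (A^(n-1)*C) + C^2*S"
    and S1: "n = 1 \<longrightarrow> S = 0" and S2: "n \<ge> 2 \<longrightarrow> degree S \<le> (n-2) * degree A"
    using binom_main[of C A n] degA degC jm n1 by auto
  have cS: "coeff (C^2*S) D = 0"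
  proof (cases "n = 1")
    case True then show ?thesis using S1 by simp
  next
    case False
    then have n2: "n \<ge> 2" using n1 by simp
    have "degree (C^2*S) \<le> 2*j + (n-2)*m"
      using degree_mult_le[of "C^2" S] degree_power_le[of C 2] S2 n2 degA degC by simp
    also have "\<dots> < D" unfolding D_def using jm n2
    proof -
      obtain k where k: "n = k + 2" using n2 by (intro that[of "n-2"]) simp
      have "(n-1)*m = (n-2)*m + m" unfolding k by simp
      then show "2*j + (n-2)*m < (n-1)*m + j" using jm by simp
    qed
    finally show ?thesis by (simp add: coeff_eq_0)
  qed
  have A0: "A \<noteq> 0" using degA jm by auto
  have cmid: "coeff (A^(n-1)*C) D = coeff q m ^ (n-1) * coeff q j"
  proof -
    have "degree (A^(n-1)) = (n-1)*m" using degree_power_eq[OF A0] degA by simp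
    then have "D = degree (A^(n-1)) + degree C" using D_def degC by simp
    then show ?thesis using coeff_mult_degree_sum[of "A^(n-1)" C] lead_coeff_power[of A] lcA lcC
      by simp
  qed
  have cAn: "coeff (A^n) D \<in> F" using po_power[OF sf poA] poly_over_def by auto
  have cpq: "coeff (pcompose p q) D = a * (coeff (A^n) D + of_nat n * (coeff q m ^ (n-1) * coeff q j))"
  proof -
    have "coeff (pcompose p' q) D = 0" using dp'q by (simp add: coeff_eq_0)
    then have "coeff (pcompose p q) D = a * coeff ((A+C)^n) D" using pq qAC by simp
    also have "coeff ((A+C)^n) D = coeff (A^n) D + of_nat n * coeff (A^(n-1)*C) D + coeff (C^2*S) D"
      unfolding S by simp
    finally show ?thesis using cS cmid by simp
  qed
  have cpqF: "coeff (pcompose p q) D \<in> F" using PO poly_over_def by auto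
  have aF: "a \<in> F"
  proof -
    have m0: "m > 0" using jm by simp
    have "lead_coeff (pcompose p q) = a * coeff q m ^ n"
      using lead_coeff_comp[of q p] m0 m_def a_def n_def by simp
    moreover have "lead_coeff (pcompose p q) \<in> F" using PO poly_over_def by auto
    moreover have "coeff q m ^ n \<in> F" using sf_power[OF sf] assms(5) m_def by simp
    moreover have "coeff q m ^ n \<noteq> 0" using bm0 by simp
    ultimately show ?thesis using sf_div[OF sf, of "a * coeff q m ^ n" "coeff q m ^ n"] by simp
  qed
  define X where "X = of_nat n * coeff q m ^ (n-1)"
  have XF: "X \<in> F" unfolding X_def using sf sf_of_nat[OF sf, of n] sf_power[OF sf, of "coeff q m" "n-1"] assms(5) m_def
    unfolding is_subfield_def by simp
  have X0: "X \<noteq> 0" unfolding X_def using n1 bm0 by simp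
  have "X * coeff q j = coeff (pcompose p q) D / a - coeff (A^n) D"
    using cpq a0 X_def by (simp add: field_simps)
  then have "X * coeff q j \<in> F" using sf_diff[OF sf] sf_div[OF sf] cpqF aF cAn by simp
  then have "X * coeff q j / X \<in> F" using sf_div[OF sf, of "X * coeff q j" X] XF by blast
  then have "coeff q j \<in> F" using X0 by simp
  with bj show False by simp
qed

end
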